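(* Let $a\in\mathbb{R}$, $x,y:\mathbb{N}_{a+1}\to\mathbb{R}$, $X(s)=\mathcal{N}_a\{x(k)\}$ and $Y(s)=\mathcal{N}_a\{y(k)\}$. Then $$\mathcal{N}_a\{x(k)y(k)\}=\frac{1}{2\pi\mathrm{i}}\oint_c X(z)\,Y\Big(\frac{s-z}{1-z}\Big)(1-z)^{-1}\,\mathrm{d}z,$$ where $c$ is a closed curve encircling the point $1$ (i.e. $(1,\mathrm{i}0)$) traversed clockwise and lying in the overlapping region of convergence of $X(z)$ and $Y\big(\frac{s-z}{1-z}\big)$.
   Context: For $a\in\mathbb{R}$, $\mathbb{N}_{a+1}=\{a+1,a+2,\dots\}$. For $f:\mathbb{N}_{a+1}\to\mathbb{C}$, the nabla Laplace transform ($N$-transform) is $\mathcal{N}_a\{f(k)\}=\sum_{k=1}^{\infty}(1-s)^{k-1}f(k+a)$, for those complex $s$ for which the series converges. Its inverse is given by $f(k)=\frac{1}{2\pi\mathrm{i}}\oint_c F(s)(1-s)^{-k+a}\,\mathrm{d}s$, $k\in\mathbb{N}_{a+1}$, with $c$ a clockwise closed curve around $1$ in the region of convergence of $F$. *)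

theory Defs
  imports "HOL-Complex_Analysis.Complex_Analysis"
begin

text \<open>Nabla Laplace transform: N_a{f}(s) = sum_{k>=1} (1-s)^(k-1) f(k+a).
  The function f is only used on N_{a+1} = {a+1, a+2, ...}. Reindexed with k = n+1.\<close>
definition nabla_laplace :: "real \<Rightarrow> (real \<Rightarrow> real) \<Rightarrow> complex \<Rightarrow> complex" where
  "nabla_laplace a f s = (\<Sum>n. (1 - s) ^ n * complex_of_real (f (a + real (Suc n))))"

definition nabla_conv_set :: "real \<Rightarrow> (real \<Rightarrow> real) \<Rightarrow> complex set" where
  "nabla_conv_set a f = {s. summable (\<lambda>n. (1 - s) ^ n * complex_of_real (f (a + real (Suc n))))}"

end

theory Submission
  imports Defs
begin

lemma ps_hol:
  fixes a :: "nat \<Rightarrow> complex"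
  assumes "summable (\<lambda>n. w1^n * a n)"
  shows "(\<lambda>t. \<Sum>n. (1-t)^n * a n) holomorphic_on ball 1 (norm w1)"
proof (rule power_series_holomorphic[where a="\<lambda>n. a n * (-1)^n"])
  fix t assume "t \<in> ball (1::complex) (norm w1)"
  hence "norm (1-t) < norm w1" by (simp add: dist_norm)
  hence "summable (\<lambda>n. a n * (1-t)^n)" using powser_inside[of a w1 "1-t"] assms
    by (simp add: mult.commute)
  hence "summable (\<lambda>n. (1-t)^n * a n)" by (simp add: mult.commute)
  hence "(\<lambda>n. (1-t)^n * a n) sums (\<Sum>n. (1-t)^n * a n)" by (rule summable_sums)
  moreover have "(\<lambda>n. a n * (-1)^n * (t-1)^n) = (\<lambda>n. (1-t)^n * a n)"
  proof (rule ext)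
    fix n
    have "(-1)^n * (t-1)^n = ((-1)*(t-1))^n" by (rule power_mult_distrib[symmetric])
    also have "(-1)*(t-1) = 1 - t" by simp
    finally show "a n * (-1)^n * (t-1)^n = (1-t)^n * a n" by (simp add: mult.commute mult.left_commute)
  qed
  ultimately show "(\<lambda>n. a n * (-1)^n * (t-1)^n) sums (\<Sum>n. (1-t)^n * a n)" by (simp only:)
qed

lemma unif_bound:
  fixes a :: "nat \<Rightarrow> complex" and g :: "complex \<Rightarrow> complex"
  assumes "compact K" "K \<noteq> {}" "continuous_on K g"
    and "\<And>z. z\<in>K \<Longrightarrow> \<exists>e::real. e>0 \<and> summable (\<lambda>n. (of_real (1+e) * g z)^n * a n)"
  shows "\<exists>M q. 0 \<le> M \<and> 0 \<le> q \<and> q < 1 \<and> (\<forall>z\<in>K. \<forall>n. norm (g z ^ n * a n) \<le> M * q^n)"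
proof -
  have "continuous_on K (\<lambda>z. norm (g z))" using assms(3) by (intro continuous_intros)
  then obtain z0 where z0: "z0 \<in> K" "\<And>z. z \<in> K \<Longrightarrow> norm (g z) \<le> norm (g z0)"
    using continuous_attains_sup[OF assms(1,2)] by blast
  obtain e where e: "e > 0" "summable (\<lambda>n. (of_real (1+e) * g z0)^n * a n)" using assms(4) z0(1) by blast
  have "(\<lambda>n. (of_real (1+e) * g z0)^n * a n) \<longlonglongrightarrow> 0" using summable_LIMSEQ_zero[OF e(2)] .
  hence "Bseq (\<lambda>n. (of_real (1+e) * g z0)^n * a n)" by (rule convergent_imp_Bseq[OF convergentI])
  then obtain B where B: "B > 0" "\<And>n. norm ((of_real (1+e) * g z0)^n * a n) \<le> B" by (meson BseqE)
  show ?thesis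
  proof (intro exI conjI ballI allI)
    show "0 \<le> B" using B by simp
    show "0 \<le> 1/(1+e)" using e by simp
    show "1/(1+e) < 1" using e by simp
    fix z n assume z: "z \<in> K"
    have "norm (g z ^ n * a n) = norm (g z) ^ n * norm (a n)" by (simp add: norm_mult norm_power)
    also have "\<dots> \<le> norm (g z0) ^ n * norm (a n)"
      by (intro mult_right_mono power_mono z0(2) z) auto
    also have "\<dots> = norm ((of_real (1+e) * g z0)^n * a n) * (1/(1+e))^n"
    proof -
      have nn: "norm (of_real (1+e)::complex) = (1+e)" using e by (simp only: norm_of_real)
      have "norm ((of_real (1+e) * g z0)^n * a n) * (1/(1+e))^n
          = ((1+e) * norm (g z0))^n * norm (a n) * (1/(1+e))^n"
        by (simp only: norm_mult norm_power nn)
      also have "\<dots> = norm (g z0) ^ n * norm (a n)"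
        using e by (simp add: power_mult_distrib[symmetric] field_simps)
      finally show ?thesis by simp
    qed
    also have "\<dots> \<le> B * (1/(1+e))^n"
      using B(2)[of n] e by (intro mult_right_mono) auto
    finally show "norm (g z ^ n * a n) \<le> B * (1/(1+e))^n" .
  qed
qed

lemma basic_int:
  assumes vp: "valid_path \<gamma>" and cl: "pathfinish \<gamma> = pathstart \<gamma>" and n1: "1 \<notin> path_image \<gamma>"
    and wn: "winding_number \<gamma> 1 = -1"
  shows "((\<lambda>z. (1-z)^n / (1-z)^(Suc m)) has_contour_integral (if n = m then 2*pi*\<i> else 0)) \<gamma>"
proof (cases "n = m")
  case True
  have "((\<lambda>w. 1/(w - 1)) has_contour_integral (2*pi*\<i>*winding_number \<gamma> 1)) \<gamma>"
    by (rule has_contour_integral_winding_number[OF vp n1])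
  hence "((\<lambda>w. - (1/(w - 1))) has_contour_integral (2*pi*\<i>)) \<gamma>"
    using has_contour_integral_neg wn by fastforce
  moreover have "- (1/(z - 1)) = (1-z)^n / (1-z)^(Suc m)" if "z \<in> path_image \<gamma>" for z
  proof -
    have "z \<noteq> 1" using n1 that by auto
    hence "1 - z \<noteq> 0" by simp
    thus ?thesis using True by (simp add: field_simps)
  qed
  ultimately have "((\<lambda>z. (1-z)^n / (1-z)^(Suc m)) has_contour_integral (2*pi*\<i>)) \<gamma>"
    by (rule has_contour_integral_eq)
  thus ?thesis using True by simp
next
  case False
  define k where "k = int n - int (Suc m)"
  have k1: "k + 1 \<noteq> 0" using False k_def by simp
  have der: "((\<lambda>z. - ((1-z) powi (k+1)) / of_int (k+1)) has_field_derivative (1-z) powi k) (at z within (- {1}))"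
    if "z \<in> - {1}" for z :: complex
  proof -
    have "1 - z \<noteq> 0" using that by auto
    have "((\<lambda>z. (1-z) powi (k+1)) has_field_derivative (of_int (k+1) * (1-z) powi (k+1-1) * (-1))) (at z within (- {1}))"
      by (rule DERIV_power_int) (use \<open>1 - z \<noteq> 0\<close> in \<open>auto intro!: derivative_eq_intros\<close>)
    note h = this
    have "((\<lambda>z. - ((1-z) powi (k+1)) / of_int (k+1)) has_field_derivative
          - (of_int (k+1) * (1-z) powi (k+1-1) * (-1)) / of_int (k+1)) (at z within (- {1}))"
      using DERIV_cdivide[OF DERIV_minus[OF h], of "of_int (k+1)"] by simp
    note h2 = this
    have gen: "\<And>c X::complex. c \<noteq> 0 \<Longrightarrow> - (c * X * -1)/c = X" by simp
    have "(of_int (k+1)::complex) \<noteq> 0" using k1 of_int_eq_0_iff by blast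
    from gen[OF this, of "(1-z) powi (k+1-1)"]
    have eq: "- (of_int (k+1) * (1-z) powi (k+1-1) * (-1)) / of_int (k+1) = (1-z) powi k" by simp
    show ?thesis by (rule DERIV_cong[OF h2 eq])
  qed
  have "((\<lambda>z. (1-z) powi k) has_contour_integral 0) \<gamma>"
    by (rule Cauchy_theorem_primitive[OF der vp _ cl]) (use n1 in auto)
  moreover have "(1-z) powi k = (1-z)^n / (1-z)^(Suc m)" if "z \<in> path_image \<gamma>" for z
  proof -
    have "1 - z \<noteq> 0" using n1 that by auto
    hence "(1-z) powi k = (1-z) powi (int n) / (1-z) powi (int (Suc m))"
      unfolding k_def by (rule power_int_diff[OF disjI1])
    thus ?thesis by (simp only: power_int_of_nat)
  qed
  ultimately have "((\<lambda>z. (1-z)^n / (1-z)^(Suc m)) has_contour_integral 0) \<gamma>"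
    by (rule has_contour_integral_eq)
  thus ?thesis using False by simp
qed


lemma core:
  fixes xs ys :: "nat \<Rightarrow> complex" and p :: "real \<Rightarrow> complex" and u :: complex
  assumes vp: "valid_path p" and cl: "pathfinish p = pathstart p" and n1: "1 \<notin> path_image p"
    and wn: "winding_number p 1 = -1"
    and B: "\<And>t. t \<in> {0..1} \<Longrightarrow> norm (vector_derivative p (at t)) \<le> B"
    and bx: "\<And>z n. z \<in> path_image p \<Longrightarrow> norm ((1-z)^n * xs n) \<le> Mx * qx^n"
    and qx: "0 \<le> qx" "qx < 1"
    and hy: "\<And>z n. z \<in> path_image p \<Longrightarrow> norm ((u/(1-z))^n * ys n) \<le> My * qy^n"
    and qy: "0 \<le> qy" "qy < 1"
    and bd: "\<And>z. z \<in> path_image p \<Longrightarrow> norm (1/(1-z)) \<le> D"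
  shows "(\<lambda>m. u^m * (xs m * ys m)) sums
    (contour_integral p (\<lambda>z. (\<Sum>n. (1-z)^n * xs n) * (\<Sum>n. (u/(1-z))^n * ys n) / (1-z)) / (2*pi*\<i>))"
proof -
  define K where "K = path_image p"
  define X where "X z = (\<Sum>n. (1-z)^n * xs n)" for z
  define Y where "Y z = (\<Sum>n. (u/(1-z))^n * ys n)" for z
  have gx: "summable (\<lambda>n. Mx * qx^n)" using qx by (intro summable_mult summable_geometric) auto
  have gy: "summable (\<lambda>n. My * qy^n)" using qy by (intro summable_mult summable_geometric) auto
  have sX: "summable (\<lambda>n. (1-z)^n * xs n)" if "z \<in> K" for z
    by (rule summable_comparison_test'[OF gx]) (use bx that K_def in auto)
  have sY: "summable (\<lambda>n. (u/(1-z))^n * ys n)" if "z \<in> K" for z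
    by (rule summable_comparison_test'[OF gy]) (use hy that K_def in auto)
  have D0: "0 \<le> D" using bd[of "p 0"] by (auto simp: path_image_def) (meson norm_ge_zero order_trans)
  have sumgx: "(\<Sum>n. Mx * qx^n) = Mx / (1 - qx)"
    using qx by (simp add: suminf_mult suminf_geometric summable_geometric divide_simps)
  have normX: "norm (X z) \<le> Mx / (1 - qx)" if "z \<in> K" for z
    unfolding X_def sumgx[symmetric] by (rule norm_suminf_le[OF _ gx]) (use bx that K_def in auto)
  have p0: "trivial_limit sequentially = False" by simp
  have inner: "((\<lambda>z. X z * (1/(1-z))^Suc m) has_contour_integral (2*pi*\<i>*xs m)) p" for m
  proof -
    define f where "f n z = (1-z)^n * xs n * (1/(1-z))^Suc m" for n z
    define c where "c n = (if n = m then 2*pi*\<i>*xs m else 0)" for n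
    have fi: "(f n has_contour_integral c n) p" for n
    proof -
      have "((\<lambda>z. xs n * ((1-z)^n / (1-z)^(Suc m))) has_contour_integral
             (xs n * (if n = m then 2*pi*\<i> else 0))) p"
        by (rule has_contour_integral_lmul[OF basic_int[OF vp cl n1 wn]])
      moreover have "xs n * (if n = m then 2*pi*\<i> else 0) = c n" by (simp add: c_def)
      moreover have "xs n * ((1-z)^n / (1-z)^(Suc m)) = f n z" for z
        by (simp add: f_def power_one_over field_simps)
      ultimately show ?thesis by simp
    qed
    have ul: "uniform_limit K (\<lambda>N z. \<Sum>n<N. f n z) (\<lambda>z. \<Sum>n. f n z) sequentially"
    proof (rule Weierstrass_m_test)
      show "summable (\<lambda>n. Mx * qx^n * D^Suc m)" by (rule summable_mult2[OF gx])
      fix n z assume z: "z \<in> K"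
      have "norm (f n z) = norm ((1-z)^n * xs n) * norm (1/(1-z))^Suc m"
        unfolding f_def by (simp only: norm_mult norm_power)
      also have "\<dots> \<le> Mx * qx^n * D^Suc m"
        using bx[of z n] bd[of z] z K_def D0
        by (intro mult_mono power_mono) (auto intro: order_trans[OF norm_ge_zero])
      finally show "norm (f n z) \<le> Mx * qx^n * D^Suc m" .
    qed
    have psi: "((\<lambda>z. \<Sum>n<N. f n z) has_contour_integral (\<Sum>n<N. c n)) p" for N
      by (rule has_contour_integral_sum) (auto intro: fi)
    have lim1: "(\<lambda>N. contour_integral p (\<lambda>z. \<Sum>n<N. f n z)) \<longlonglongrightarrow> contour_integral p (\<lambda>z. \<Sum>n. f n z)"
      and int1: "(\<lambda>z. \<Sum>n. f n z) contour_integrable_on p"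
      using contour_integral_uniform_limit[OF always_eventually[OF allI[OF has_contour_integral_integrable[OF psi]]] ul[unfolded K_def] B vp trivial_limit_sequentially]
      by auto
    have "(\<lambda>N. contour_integral p (\<lambda>z. \<Sum>n<N. f n z)) = (\<lambda>N. \<Sum>n<N. c n)"
      using psi contour_integral_unique by blast
    moreover have "(\<lambda>N. \<Sum>n<N. c n) \<longlonglongrightarrow> 2*pi*\<i>*xs m"
      using sums_single[of m "\<lambda>_. 2*pi*\<i>*xs m"] unfolding c_def sums_def by simp
    ultimately have "contour_integral p (\<lambda>z. \<Sum>n. f n z) = 2*pi*\<i>*xs m"
      using lim1 LIMSEQ_unique by metis
    hence "((\<lambda>z. \<Sum>n. f n z) has_contour_integral (2*pi*\<i>*xs m)) p"
      using has_contour_integral_integral[OF int1] by simp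
    moreover have "(\<Sum>n. f n z) = X z * (1/(1-z))^Suc m" if "z \<in> path_image p" for z
    proof -
      have "z \<in> K" using that K_def by simp
      show ?thesis unfolding f_def X_def by (rule suminf_mult2[OF sX, symmetric]) fact
    qed
    ultimately show ?thesis by (rule has_contour_integral_eq)
  qed
  define g where "g m z = (u/(1-z))^m * ys m * (X z * (1/(1-z)))" for m z
  define c where "c m = u^m * ys m * (2*pi*\<i>*xs m)" for m
  have gi: "(g m has_contour_integral c m) p" for m
  proof -
    have "((\<lambda>z. u^m * ys m * (X z * (1/(1-z))^Suc m)) has_contour_integral c m) p"
      unfolding c_def by (rule has_contour_integral_lmul[OF inner])
    moreover have "u^m * ys m * (X z * (1/(1-z))^Suc m) = g m z" for z
      by (simp add: g_def power_divide power_one_over field_simps)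
    ultimately show ?thesis by simp
  qed
  have ul: "uniform_limit K (\<lambda>N z. \<Sum>m<N. g m z) (\<lambda>z. \<Sum>m. g m z) sequentially"
  proof (rule Weierstrass_m_test)
    show "summable (\<lambda>m. My * qy^m * (Mx / (1 - qx) * D))" by (rule summable_mult2[OF gy])
    fix m z assume z: "z \<in> K"
    have "norm (g m z) = norm ((u/(1-z))^m * ys m) * (norm (X z) * norm (1/(1-z)))"
      unfolding g_def by (simp only: norm_mult)
    also have "\<dots> \<le> My * qy^m * (Mx / (1 - qx) * D)"
      using hy[of z m] bd[of z] normX[OF z] z K_def D0
      by (intro mult_mono) (auto intro: order_trans[OF norm_ge_zero])
    finally show "norm (g m z) \<le> My * qy^m * (Mx / (1 - qx) * D)" .
  qed
  have psi: "((\<lambda>z. \<Sum>m<N. g m z) has_contour_integral (\<Sum>m<N. c m)) p" for N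
    by (rule has_contour_integral_sum) (auto intro: gi)
  have lim1: "(\<lambda>N. contour_integral p (\<lambda>z. \<Sum>m<N. g m z)) \<longlonglongrightarrow> contour_integral p (\<lambda>z. \<Sum>m. g m z)"
      using contour_integral_uniform_limit[OF always_eventually[OF allI[OF has_contour_integral_integrable[OF psi]]] ul[unfolded K_def] B vp trivial_limit_sequentially]
      by auto
  have "(\<lambda>N. contour_integral p (\<lambda>z. \<Sum>m<N. g m z)) = (\<lambda>N. \<Sum>m<N. c m)"
    using psi contour_integral_unique by blast
  with lim1 have "c sums contour_integral p (\<lambda>z. \<Sum>m. g m z)"
    unfolding sums_def by simp
  moreover have "contour_integral p (\<lambda>z. \<Sum>m. g m z) =
      contour_integral p (\<lambda>z. X z * Y z / (1-z))"
  proof (rule contour_integral_eq)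
    fix z assume "z \<in> path_image p"
    hence z: "z \<in> K" by (simp add: K_def)
    have "(\<Sum>m. g m z) = Y z * (X z * (1/(1-z)))"
      unfolding g_def Y_def by (rule suminf_mult2[OF sY[OF z], symmetric])
    thus "(\<Sum>m. g m z) = X z * Y z / (1-z)" by simp
  qed
  ultimately have "c sums contour_integral p (\<lambda>z. X z * Y z / (1-z))" by simp
  hence "(\<lambda>m. c m / (2*pi*\<i>)) sums (contour_integral p (\<lambda>z. X z * Y z / (1-z)) / (2*pi*\<i>))"
    by (rule sums_divide)
  moreover have "c m / (2*pi*\<i>) = u^m * (xs m * ys m)" for m
    by (simp add: c_def field_simps)
  ultimately show ?thesis unfolding X_def Y_def by simp
qed


lemma ext_lemma:
  assumes "z0 \<in> interior (nabla_conv_set a x \<inter> {z. z \<noteq> 1 \<and> (s - z) / (1 - z) \<in> nabla_conv_set a y})"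
  shows "z0 \<noteq> 1 \<and> (\<exists>e::real. e > 0 \<and>
     summable (\<lambda>n. (of_real (1+e) * (1-z0))^n * complex_of_real (x (a + real (Suc n)))) \<and>
     summable (\<lambda>n. (of_real (1+e) * ((1-s)/(1-z0)))^n * complex_of_real (y (a + real (Suc n)))))"
proof -
  let ?S0 = "nabla_conv_set a x \<inter> {z. z \<noteq> 1 \<and> (s - z) / (1 - z) \<in> nabla_conv_set a y}"
  obtain r where r: "r > 0" "ball z0 r \<subseteq> ?S0" using assms mem_interior by blast
  have "z0 \<in> ?S0" using r by (meson centre_in_ball subsetD)
  hence z01: "z0 \<noteq> 1" by auto
  define e where "e = r / (2 * (norm (1-z0) + 1))"
  have e0: "e > 0" using r(1) unfolding e_def by (intro divide_pos_pos) (auto intro: add_nonneg_pos)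
  have er: "e * norm (1-z0) < r"
  proof -
    have "e * norm (1-z0) = r * (norm (1-z0) / (2 * (norm (1-z0) + 1)))" by (simp add: e_def)
    also have "\<dots> < r * 1"
    proof (intro mult_strict_left_mono)
      have "norm (1-z0) < 2 * (norm (1-z0) + 1)" by (smt (verit) norm_ge_zero)
      thus "norm (1-z0) / (2 * (norm (1-z0) + 1)) < 1"
        by (subst divide_less_eq_1_pos) (auto intro: add_nonneg_pos)
    qed (use r in auto)
    finally show ?thesis by simp
  qed
  define z1 where "z1 = 1 - of_real (1+e) * (1-z0)"
  have "dist z0 z1 = e * norm (1-z0)"
  proof -
    have "z0 - z1 = of_real e * (1 - z0)" by (simp add: z1_def algebra_simps)
    thus ?thesis using e0 by (simp add: dist_norm norm_mult)
  qed
  hence "z1 \<in> ball z0 r" using er by simp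
  hence "z1 \<in> nabla_conv_set a x" using r by auto
  hence sx: "summable (\<lambda>n. (of_real (1+e) * (1-z0))^n * complex_of_real (x (a + real (Suc n))))"
    by (simp add: nabla_conv_set_def z1_def)
  define z2 where "z2 = 1 - (1-z0) / of_real (1+e)"
  have ne: "(of_real (1+e) :: complex) \<noteq> 0" using e0
    by (metis add_pos_pos less_numeral_extra(1) of_real_eq_0_iff order_less_irrefl)
  have "dist z0 z2 = e / (1+e) * norm (1-z0)"
  proof -
    have "z2 - z0 = of_real (e/(1+e)) * (1 - z0)" using ne e0
      by (simp add: z2_def field_simps)
    hence "norm (z2 - z0) = norm (of_real (e/(1+e)) :: complex) * norm (1-z0)"
      by (simp only: norm_mult)
    also have "norm (of_real (e/(1+e)) :: complex) = e/(1+e)" using e0 by (simp only: norm_of_real) simp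
    finally have "norm (z2 - z0) = e / (1+e) * norm (1-z0)" .
    thus ?thesis by (simp add: dist_norm norm_minus_commute)
  qed
  also have "\<dots> \<le> e * norm (1-z0)" using e0
    by (intro mult_right_mono) (auto simp: field_simps)
  finally have "z2 \<in> ball z0 r" using er by simp
  hence "z2 \<noteq> 1 \<and> (s - z2) / (1 - z2) \<in> nabla_conv_set a y" using r by auto
  moreover have "1 - (s - z2) / (1 - z2) = of_real (1+e) * ((1-s)/(1-z0))"
  proof -
    have h1: "1 - z2 = (1-z0) / of_real (1+e)" by (simp add: z2_def)
    have h2: "1 - z2 \<noteq> 0" using h1 z01 ne by simp
    have "1 - (s - z2) / (1 - z2) = (1-s)/(1-z2)" using h2 by (simp add: field_simps)
    also have "\<dots> = of_real (1+e) * ((1-s)/(1-z0))" unfolding h1 using ne z01 by simp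
    finally show ?thesis .
  qed
  ultimately have sy: "summable (\<lambda>n. (of_real (1+e) * ((1-s)/(1-z0)))^n * complex_of_real (y (a + real (Suc n))))"
    by (simp add: nabla_conv_set_def)
  show ?thesis using z01 e0 sx sy by blast
qed


theorem theorem12:
  fixes a :: real and x y :: "real \<Rightarrow> real" and s :: complex and c :: "real \<Rightarrow> complex"
  assumes "valid_path c"
    and "pathfinish c = pathstart c"
    and "1 \<notin> path_image c"
    and "winding_number c 1 = -1"
    and "path_image c \<subseteq> interior (nabla_conv_set a x \<inter>
           {z. z \<noteq> 1 \<and> (s - z) / (1 - z) \<in> nabla_conv_set a y})"
  shows "nabla_laplace a (\<lambda>k. x k * y k) s =
         1 / (2 * pi * \<i>) * contour_integral c
           (\<lambda>z. nabla_laplace a x z * nabla_laplace a y ((s - z) / (1 - z)) / (1 - z))"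
proof -
  define xs where "xs n = complex_of_real (x (a + real (Suc n)))" for n
  define ys where "ys n = complex_of_real (y (a + real (Suc n)))" for n
  define S where "S = interior (nabla_conv_set a x \<inter>
           {z. z \<noteq> 1 \<and> (s - z) / (1 - z) \<in> nabla_conv_set a y})"
  have pc: "path_image c \<subseteq> S" using assms(5) S_def by simp
  have oS: "open S" unfolding S_def by (rule open_interior)
  have hext: "z \<noteq> 1 \<and> (\<exists>e::real. e>0 \<and> summable (\<lambda>n. (of_real (1+e) * (1-z))^n * xs n) \<and>
      summable (\<lambda>n. (of_real (1+e) * ((1-s)/(1-z)))^n * ys n))" if "z \<in> S" for z
    using ext_lemma[of z a x s y] that unfolding S_def xs_def ys_def by blast
  have n1S: "1 \<notin> S" using hext by blast
  have Xeq: "nabla_laplace a x = (\<lambda>t. \<Sum>n. (1-t)^n * xs n)"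
    by (rule ext) (simp add: nabla_laplace_def xs_def)
  have Yeq: "nabla_laplace a y = (\<lambda>t. \<Sum>n. (1-t)^n * ys n)"
    by (rule ext) (simp add: nabla_laplace_def ys_def)
  define F where "F z = nabla_laplace a x z * nabla_laplace a y ((s - z) / (1 - z)) / (1 - z)" for z
  have holF: "F holomorphic_on S"
  proof -
    have "F field_differentiable (at z0)" if z0: "z0 \<in> S" for z0
    proof -
      obtain e::real where z01: "z0 \<noteq> 1" and e: "e>0"
        and sx: "summable (\<lambda>n. (of_real (1+e) * (1-z0))^n * xs n)"
        and sy: "summable (\<lambda>n. (of_real (1+e) * ((1-s)/(1-z0)))^n * ys n)"
        using hext[OF z0] by blast
      have nn: "norm (of_real (1+e) :: complex) = 1 + e" using e by (simp only: norm_of_real)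
      have dX: "nabla_laplace a x field_differentiable (at z0)"
      proof -
        have h: "nabla_laplace a x holomorphic_on ball 1 (norm (of_real (1+e) * (1-z0)))"
          unfolding Xeq by (rule ps_hol[OF sx])
        have "norm (of_real (1+e) * (1-z0)) = (1+e) * norm (1-z0)" by (simp only: norm_mult nn)
        moreover have "norm (1-z0) > 0" using z01 by simp
        ultimately have "z0 \<in> ball 1 (norm (of_real (1+e) * (1-z0)))"
          using e by (simp add: dist_norm)
        thus ?thesis using holomorphic_on_imp_differentiable_at[OF h open_ball] by blast
      qed
      have dY: "(\<lambda>z. nabla_laplace a y ((s - z) / (1 - z))) field_differentiable (at z0)"
      proof (cases "s = 1")
        case True
        have c0: "(\<lambda>z. nabla_laplace a y 1) field_differentiable (at z0 within UNIV)"
          by (rule field_differentiable_const)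
        show ?thesis
        proof (rule field_differentiable_transform_within[OF _ _ _ c0])
          show "0 < dist z0 1" using z01 by simp
          fix x' assume "dist x' z0 < dist z0 1"
          hence "x' \<noteq> 1" by (auto simp: dist_commute)
          thus "nabla_laplace a y 1 = nabla_laplace a y ((s - x') / (1 - x'))" using True by simp
        qed auto
      next
        case False
        have hm: "(\<lambda>z. (s - z) / (1 - z)) field_differentiable (at z0)"
        proof (rule holomorphic_on_imp_differentiable_at[of _ "-{1}"])
          show "(\<lambda>z. (s - z) / (1 - z)) holomorphic_on - {1}" by (auto intro!: holomorphic_intros)
        qed (use z01 in auto)
        have h: "nabla_laplace a y holomorphic_on ball 1 (norm (of_real (1+e) * ((1-s)/(1-z0))))"
          unfolding Yeq by (rule ps_hol[OF sy])
        have "norm (of_real (1+e) * ((1-s)/(1-z0))) = (1+e) * norm ((1-s)/(1-z0))" by (simp only: norm_mult nn)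
        moreover have "norm ((1-s)/(1-z0)) > 0" using z01 False by simp
        moreover have "1 - (s - z0) / (1 - z0) = (1-s)/(1-z0)" using z01 by (simp add: field_simps)
        ultimately have "(s - z0) / (1 - z0) \<in> ball 1 (norm (of_real (1+e) * ((1-s)/(1-z0))))"
          using e by (simp add: dist_norm)
        from field_differentiable_compose[OF hm holomorphic_on_imp_differentiable_at[OF h open_ball this]]
        show ?thesis by (simp add: o_def)
      qed
      have d1: "(\<lambda>z. 1 - z) field_differentiable (at z0)"
        by (intro field_differentiable_diff field_differentiable_const field_differentiable_ident)
      show ?thesis unfolding F_def
        by (intro field_differentiable_divide field_differentiable_mult dX dY d1) (use z01 in auto)
    qed
    thus ?thesis using holomorphic_on_def field_differentiable_at_within by blast
  qed
  have "path c" using assms(1) valid_path_imp_path by blast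
  obtain d where d0: "d>0"
      and d: "\<And>g h. \<lbrakk>valid_path g; valid_path h; \<forall>t\<in>{0..1}. cmod (g t - c t) < d \<and> cmod (h t - c t) < d;
                     pathstart h = pathstart g \<and> pathfinish h = pathfinish g\<rbrakk>
                     \<Longrightarrow> path_image g \<subseteq> S \<and> path_image h \<subseteq> S \<and>
                         (\<forall>f. f holomorphic_on S \<longrightarrow> contour_integral h f = contour_integral g f)"
    using contour_integral_nearby_ends [OF oS \<open>path c\<close> pc] by metis
  obtain p where polyp: "polynomial_function p"
             and ps: "pathstart p = pathstart c" and pf: "pathfinish p = pathfinish c"
             and led: "\<forall>t\<in>{0..1}. cmod (p t - c t) < d"
    using path_approx_polynomial_function [OF \<open>path c\<close> d0] by metis
  have vpp: "valid_path p" using polyp valid_path_polynomial_function by blast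
  have paps: "path_image p \<subseteq> S" and cint_eq: "\<And>f. f holomorphic_on S \<Longrightarrow> contour_integral p f = contour_integral c f"
    using pf ps led d [OF assms(1) vpp] d0 by auto
  have n1p: "1 \<notin> path_image p" using paps n1S by blast
  have hol1: "(\<lambda>w. 1/(w-1)) holomorphic_on S"
    using n1S by (auto intro!: holomorphic_intros)
  have wnp: "winding_number p 1 = -1"
    using assms(4) vpp assms(1) n1p assms(3)
    by (simp add: winding_number_valid_path cint_eq[OF hol1])
  have clp: "pathfinish p = pathstart p" using ps pf assms(2) by simp
  define K where "K = path_image p"
  have cK: "compact K" unfolding K_def using vpp valid_path_imp_path by blast
  have neK: "K \<noteq> {}" unfolding K_def by (simp add: path_image_nonempty)
  have KS: "\<And>z. z \<in> K \<Longrightarrow> z \<in> S" using paps K_def by auto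
  have K1: "\<And>z. z \<in> K \<Longrightarrow> 1 - z \<noteq> 0" using KS n1S by force
  obtain Mx qx where qx: "0 \<le> qx" "qx < 1"
    and bx: "\<And>z n. z \<in> K \<Longrightarrow> norm ((1 - z)^n * xs n) \<le> Mx * qx^n"
  proof -
    have "\<exists>M q. 0 \<le> M \<and> 0 \<le> q \<and> q < 1 \<and> (\<forall>z\<in>K. \<forall>n. norm ((1 - z)^n * xs n) \<le> M * q^n)"
      by (rule unif_bound[OF cK neK]) (auto intro!: continuous_intros dest!: KS hext)
    thus ?thesis using that by blast
  qed
  obtain My qy where qy: "0 \<le> qy" "qy < 1"
    and hy: "\<And>z n. z \<in> K \<Longrightarrow> norm (((1-s)/(1 - z))^n * ys n) \<le> My * qy^n"
  proof -
    have "\<exists>M q. 0 \<le> M \<and> 0 \<le> q \<and> q < 1 \<and> (\<forall>z\<in>K. \<forall>n. norm (((1-s)/(1 - z))^n * ys n) \<le> M * q^n)"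
      by (rule unif_bound[OF cK neK]) (auto intro!: continuous_intros dest: K1 dest!: KS hext)
    thus ?thesis using that by blast
  qed
  obtain D where bd: "\<And>z. z \<in> K \<Longrightarrow> norm (1/(1-z)) \<le> D"
  proof -
    have "continuous_on K (\<lambda>z. 1/(1-z))" by (auto intro!: continuous_intros dest: K1)
    hence "bounded ((\<lambda>z. 1/(1-z)) ` K)" by (intro compact_imp_bounded compact_continuous_image cK)
    thus ?thesis using that unfolding bounded_iff by blast
  qed
  obtain p' where p': "polynomial_function p'" "\<And>t. (p has_vector_derivative (p' t)) (at t)"
    using has_vector_derivative_polynomial_function[OF polyp] by blast
  have "bounded (p' ` {0..1})"
    using continuous_on_polymonial_function[OF p'(1)]
    by (force intro!: compact_imp_bounded compact_continuous_image)
  then obtain B where B: "\<And>t. t \<in> {0..1} \<Longrightarrow> norm (vector_derivative p (at t)) \<le> B"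
    using vector_derivative_at[OF p'(2)] unfolding bounded_iff by fastforce
  have main: "(\<lambda>m. (1-s)^m * (xs m * ys m)) sums
    (contour_integral p (\<lambda>z. (\<Sum>n. (1-z)^n * xs n) * (\<Sum>n. ((1-s)/(1-z))^n * ys n) / (1-z)) / (2*pi*\<i>))"
    by (rule core[OF vpp clp n1p wnp B bx[unfolded K_def] qx hy[unfolded K_def] qy bd[unfolded K_def]])
  have "contour_integral p (\<lambda>z. (\<Sum>n. (1-z)^n * xs n) * (\<Sum>n. ((1-s)/(1-z))^n * ys n) / (1-z))
       = contour_integral p F"
  proof (rule contour_integral_eq)
    fix z assume "z \<in> path_image p"
    hence "1 - z \<noteq> 0" using K1 K_def by blast
    hence "1 - (s - z) / (1 - z) = (1-s)/(1-z)" by (simp add: field_simps)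
    thus "(\<Sum>n. (1-z)^n * xs n) * (\<Sum>n. ((1-s)/(1-z))^n * ys n) / (1-z) = F z"
      unfolding F_def Xeq Yeq by simp
  qed
  also have "\<dots> = contour_integral c F" by (rule cint_eq[OF holF])
  finally have main2: "(\<lambda>m. (1-s)^m * (xs m * ys m)) sums (contour_integral c F / (2*pi*\<i>))"
    using main by simp
  have "nabla_laplace a (\<lambda>k. x k * y k) s = (\<Sum>m. (1-s)^m * (xs m * ys m))"
    by (simp add: nabla_laplace_def xs_def ys_def)
  also have "\<dots> = contour_integral c F / (2*pi*\<i>)" using main2 by (rule sums_unique[symmetric])
  finally show ?thesis unfolding F_def by simp
qed

end
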